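(* Complete semantics is serialisable with the selection function $\alpha_{adm}(X,Y,Z)=X\cup Y\cup Z$ and the termination function $\beta_{co}(F,S)=1$ if $\mathrm{IS}^u(F)=\emptyset$ and $\beta_{co}(F,S)=0$ otherwise.
   Context: An abstract argumentation framework (AF) is a pair $F=(A,R)$ with $A$ a finite subset of a fixed universal set of arguments $\mathfrak{A}$ and $R\subseteq A\times A$ ($a\to b$ means $(a,b)\in R$). For $S\subseteq A$: $S^+=\{a\mid \exists b\in S: b\to a\}$, $S^-=\{a\mid\exists b\in S: a\to b\}$; for sets $S,S'$, $S\to S'$ means $S^+\cap S'\neq\emptyset$. $S$ is conflict-free if no $a,b\in S$ with $a\to b$; $S$ defends $b$ if every attacker of $b$ is attacked by some element of $S$; $S$ is admissible if conflict-free and defends all its elements. A complete extension is an admissible set $E$ containing every argument it defends. An initial set is a non-empty admissible set with no non-empty admissible proper subset; $\mathrm{IS}(F)$ is the set of initial sets. An initial set $S$ is unattacked if $S^-=\emptyset$; unchallenged if $S^-\neq\emptyset$ and no $S'\in\mathrm{IS}(F)$ has $S'\to S$; challenged if some $S'\in\mathrm{IS}(F)$ has $S'\to S$. Write $\mathrm{IS}^{u}(F),\mathrm{IS}^{uc}(F),\mathrm{IS}^{c}(F)$ for these sets. The reduct is $F^S=(A',R\cap(A'\times A'))$ with $A'=A\setminus(S\cup S^+)$. A selection function $\alpha$ maps any three sets $X,Y,Z$ of sets of arguments to a subset of $X\cup Y\cup Z$; a termination function $\beta$ maps pairs $(F,S)$ to $\{0,1\}$. Transitions: $(F,S)\to(F^{S'},S\cup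 S')$ whenever $S'\in\alpha(\mathrm{IS}^u(F),\mathrm{IS}^{uc}(F),\mathrm{IS}^c(F))$. $(F,S)\leadsto^{\alpha,\beta}(F',S')$ means $(F',S')$ is reachable from $(F,S)$ in finitely many (possibly zero) transitions and $\beta(F',S')=1$. $\mathcal{E}^{\alpha,\beta}(F)$ is the set of all $S$ with $(F,\emptyset)\leadsto^{\alpha,\beta}(F',S)$ for some $F'$. A semantics $\sigma$ is serialisable with $\alpha,\beta$ if $\sigma(F)=\mathcal{E}^{\alpha,\beta}(F)$ for all AFs $F$. *)

theory Defs
  imports Main
begin

text \<open>An AF over the universal set of arguments (the type 'a) is a pair (A, R).\<close>
type_synonym 'a af = "'a set \<times> ('a \<times> 'a) set"

definition is_AF :: "'a af \<Rightarrow> bool" where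
  "is_AF F \<longleftrightarrow> finite (fst F) \<and> snd F \<subseteq> fst F \<times> fst F"

definition plus_set :: "('a \<times> 'a) set \<Rightarrow> 'a set \<Rightarrow> 'a set" where
  "plus_set R S = {a. \<exists>b\<in>S. (b, a) \<in> R}"

definition minus_set :: "('a \<times> 'a) set \<Rightarrow> 'a set \<Rightarrow> 'a set" where
  "minus_set R S = {a. \<exists>b\<in>S. (a, b) \<in> R}"

definition set_attacks :: "('a \<times> 'a) set \<Rightarrow> 'a set \<Rightarrow> 'a set \<Rightarrow> bool" where
  "set_attacks R S S' \<longleftrightarrow> plus_set R S \<inter> S' \<noteq> {}"

definition conflict_free :: "'a af \<Rightarrow> 'a set \<Rightarrow> bool" where
  "conflict_free F S \<longleftrightarrow> (\<forall>a\<in>S. \<forall>b\<in>S. (a, b) \<notin> snd F)"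

definition defends :: "'a af \<Rightarrow> 'a set \<Rightarrow> 'a \<Rightarrow> bool" where
  "defends F S b \<longleftrightarrow> (\<forall>c. (c, b) \<in> snd F \<longrightarrow> (\<exists>d\<in>S. (d, c) \<in> snd F))"

definition admissible :: "'a af \<Rightarrow> 'a set \<Rightarrow> bool" where
  "admissible F S \<longleftrightarrow> S \<subseteq> fst F \<and> conflict_free F S \<and> (\<forall>b\<in>S. defends F S b)"

definition complete_ext :: "'a af \<Rightarrow> 'a set \<Rightarrow> bool" where
  "complete_ext F E \<longleftrightarrow> admissible F E \<and> (\<forall>b\<in>fst F. defends F E b \<longrightarrow> b \<in> E)"

definition complete_sem :: "'a af \<Rightarrow> 'a set set" where
  "complete_sem F = {E. complete_ext F E}"

definition initial_set :: "'a af \<Rightarrow> 'a set \<Rightarrow> bool" where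
  "initial_set F S \<longleftrightarrow> S \<noteq> {} \<and> admissible F S \<and>
     \<not> (\<exists>S'. S' \<noteq> {} \<and> S' \<subset> S \<and> admissible F S')"

definition IS :: "'a af \<Rightarrow> 'a set set" where
  "IS F = {S. initial_set F S}"

definition IS_u :: "'a af \<Rightarrow> 'a set set" where
  "IS_u F = {S \<in> IS F. minus_set (snd F) S = {}}"

definition IS_uc :: "'a af \<Rightarrow> 'a set set" where
  "IS_uc F = {S \<in> IS F. minus_set (snd F) S \<noteq> {} \<and>
                 \<not> (\<exists>S'\<in>IS F. set_attacks (snd F) S' S)}"

definition IS_c :: "'a af \<Rightarrow> 'a set set" where
  "IS_c F = {S \<in> IS F. \<exists>S'\<in>IS F. set_attacks (snd F) S' S}"

definition reduct :: "'a af \<Rightarrow> 'a set \<Rightarrow> 'a af" where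
  "reduct F S = (let A' = fst F - (S \<union> plus_set (snd F) S)
                 in (A', snd F \<inter> (A' \<times> A')))"

text \<open>Selection functions map three sets of argument sets to a subset of their union;
  termination functions map (F, S) to {0,1}, represented here as bool (1 = True).\<close>
type_synonym 'a selection = "'a set set \<Rightarrow> 'a set set \<Rightarrow> 'a set set \<Rightarrow> 'a set set"
type_synonym 'a term_fun = "'a af \<Rightarrow> 'a set \<Rightarrow> bool"

inductive trans_step :: "'a selection \<Rightarrow> 'a af \<times> 'a set \<Rightarrow> 'a af \<times> 'a set \<Rightarrow> bool"
  for \<alpha> :: "'a selection" where
  "S' \<in> \<alpha> (IS_u F) (IS_uc F) (IS_c F) \<Longrightarrow>
     trans_step \<alpha> (F, S) (reduct F S', S \<union> S')"

definition leadsto :: "'a selection \<Rightarrow> 'a term_fun \<Rightarrow> 'a af \<times> 'a set \<Rightarrow> 'a af \<times> 'a set \<Rightarrow> bool" where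
  "leadsto \<alpha> \<beta> c c' \<longleftrightarrow> (trans_step \<alpha>)\<^sup>*\<^sup>* c c' \<and> \<beta> (fst c') (snd c')"

definition serial_ext :: "'a selection \<Rightarrow> 'a term_fun \<Rightarrow> 'a af \<Rightarrow> 'a set set" where
  "serial_ext \<alpha> \<beta> F = {S. \<exists>F'. leadsto \<alpha> \<beta> (F, {}) (F', S)}"

definition serialisable :: "('a af \<Rightarrow> 'a set set) \<Rightarrow> 'a selection \<Rightarrow> 'a term_fun \<Rightarrow> bool" where
  "serialisable \<sigma> \<alpha> \<beta> \<longleftrightarrow> (\<forall>F. is_AF F \<longrightarrow> \<sigma> F = serial_ext \<alpha> \<beta> F)"

definition alpha_adm :: "'a selection" where
  "alpha_adm X Y Z = X \<union> Y \<union> Z"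

definition beta_co :: "'a term_fun" where
  "beta_co F S \<longleftrightarrow> IS_u F = {}"

end

theory Submission
  imports Defs
begin

lemma alpha_IS: "alpha_adm (IS_u G) (IS_uc G) (IS_c G) = IS G"
  unfolding alpha_adm_def IS_u_def IS_uc_def IS_c_def by blast

lemma reduct_reduct:
  assumes "S' \<subseteq> fst (reduct F S)"
  shows "reduct (reduct F S) S' = reduct F (S \<union> S')"
proof -
  obtain A R where F: "F = (A, R)" by (cases F)
  let ?A' = "A - (S \<union> plus_set R S)"
  let ?B = "?A' - (S' \<union> plus_set (R \<inter> ?A' \<times> ?A') S')"
  let ?C = "A - (S \<union> S' \<union> plus_set R (S \<union> S'))"
  have rF: "reduct F S = (?A', R \<inter> (?A' \<times> ?A'))" unfolding F reduct_def Let_def by simp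
  have a: "S' \<subseteq> ?A'" using assms rF by simp
  have e: "?B = ?C" using a unfolding plus_set_def by blast
  have "?B \<subseteq> ?A'" by blast
  then have e2: "R \<inter> ?A' \<times> ?A' \<inter> ?B \<times> ?B = R \<inter> ?C \<times> ?C" using e by blast
  show ?thesis unfolding rF unfolding reduct_def Let_def F fst_conv snd_conv using e e2
    by (simp add: Un_assoc)
qed

lemma reduct_empty: "is_AF F \<Longrightarrow> reduct F {} = F"
  unfolding reduct_def is_AF_def plus_set_def Let_def by (cases F) auto

lemma adm_union:
  assumes af: "is_AF F" and a: "admissible F S" and b: "admissible (reduct F S) S'"
  shows "admissible F (S \<union> S')"
proof -
  obtain A R where F: "F = (A, R)" by (cases F)
  let ?A' = "A - (S \<union> plus_set R S)"
  have rF: "reduct F S = (?A', R \<inter> (?A' \<times> ?A'))" unfolding F reduct_def Let_def by simp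
  have RA: "R \<subseteq> A \<times> A" using af F unfolding is_AF_def by simp
  have a': "S \<subseteq> A \<and> (\<forall>x\<in>S. \<forall>y\<in>S. (x,y) \<notin> R) \<and> (\<forall>x\<in>S. \<forall>c. (c,x) \<in> R \<longrightarrow> (\<exists>d\<in>S. (d,c) \<in> R))"
    using a unfolding admissible_def conflict_free_def defends_def F fst_conv snd_conv .
  have SA: "S \<subseteq> A" using a' by simp
  have cfS: "\<And>x y. x \<in> S \<Longrightarrow> y \<in> S \<Longrightarrow> (x,y) \<notin> R" using a' by blast
  have dS: "\<And>x c. x \<in> S \<Longrightarrow> (c,x) \<in> R \<Longrightarrow> \<exists>d\<in>S. (d,c) \<in> R" using a' by blast
  have b': "S' \<subseteq> ?A' \<and> (\<forall>x\<in>S'. \<forall>y\<in>S'. (x,y) \<notin> R \<inter> (?A' \<times> ?A')) \<and> (\<forall>x\<in>S'. \<forall>c. (c,x) \<in> R \<inter> (?A' \<times> ?A') \<longrightarrow> (\<exists>d\<in>S'. (d,c) \<in> R \<inter> (?A' \<times> ?A')))"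
    using b unfolding admissible_def conflict_free_def defends_def rF fst_conv snd_conv .
  have S'A: "S' \<subseteq> ?A'" using b' by simp
  have cfS': "\<And>x y. x \<in> S' \<Longrightarrow> y \<in> S' \<Longrightarrow> (x,y) \<notin> R"
  proof -
    fix x y assume "x \<in> S'" "y \<in> S'"
    moreover then have "x \<in> ?A'" "y \<in> ?A'" using S'A by auto
    ultimately show "(x,y) \<notin> R" using b' by blast
  qed
  have dS': "\<And>x c. x \<in> S' \<Longrightarrow> (c,x) \<in> R \<Longrightarrow> c \<in> ?A' \<Longrightarrow> \<exists>d\<in>S'. (d,c) \<in> R"
  proof -
    fix x c assume x: "x \<in> S'" and cx: "(c,x) \<in> R" and c: "c \<in> ?A'"
    have "x \<in> ?A'" using x S'A by auto
    then have "(c,x) \<in> R \<inter> (?A' \<times> ?A')" using cx c by blast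
    then obtain d where "d \<in> S'" "(d,c) \<in> R \<inter> (?A' \<times> ?A')" using b' x by blast
    then show "\<exists>d\<in>S'. (d,c) \<in> R" by blast
  qed
  have notplus: "\<And>x y. x \<in> S \<Longrightarrow> y \<in> S' \<Longrightarrow> (x,y) \<notin> R"
    using S'A unfolding plus_set_def by blast
  show ?thesis unfolding admissible_def conflict_free_def defends_def F fst_conv snd_conv
  proof (intro conjI ballI allI impI)
    show "S \<union> S' \<subseteq> A" using SA S'A by auto
  next
    fix x y assume x: "x \<in> S \<union> S'" and y: "y \<in> S \<union> S'"
    show "(x,y) \<notin> R"
    proof
      assume xy: "(x,y) \<in> R"
      show False
      proof (cases "y \<in> S")
        case True
        show False
        proof (cases "x \<in> S")
          case True with \<open>y \<in> S\<close> xy cfS show False by blast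
        next
          case False
          then have "x \<in> S'" using x by blast
          from dS[OF \<open>y \<in> S\<close> xy] obtain d where "d \<in> S" "(d,x) \<in> R" by blast
          with notplus \<open>x \<in> S'\<close> show False by blast
        qed
      next
        case False
        then have "y \<in> S'" using y by blast
        show False
          using x xy notplus[OF _ \<open>y \<in> S'\<close>] cfS'[OF _ \<open>y \<in> S'\<close>] by blast
      qed
    qed
  next
    fix b c assume bS: "b \<in> S \<union> S'" and cb: "(c,b) \<in> R"
    show "\<exists>d\<in>S \<union> S'. (d, c) \<in> R"
    proof (cases "b \<in> S")
      case True then show ?thesis using dS cb by blast
    next
      case False
      then have "b \<in> S'" using bS by blast
      show ?thesis
      proof (cases "c \<in> ?A'")
        case True then show ?thesis using dS'[OF \<open>b \<in> S'\<close> cb] by blast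
      next
        case False
        have "c \<in> A" using RA cb by blast
        with False have "c \<in> S \<or> c \<in> plus_set R S" by blast
        then show ?thesis
        proof
          assume "c \<in> S" then show ?thesis using notplus[OF _ \<open>b \<in> S'\<close>] cb by blast
        next
          assume "c \<in> plus_set R S" then show ?thesis unfolding plus_set_def by blast
        qed
      qed
    qed
  qed
qed

lemma IS_sub: "T \<in> IS G \<Longrightarrow> T \<subseteq> fst G \<and> admissible G T"
  unfolding IS_def initial_set_def admissible_def by auto

lemma reach_inv:
  assumes "(trans_step alpha_adm)\<^sup>*\<^sup>* (F, {}) (G, S)" and af: "is_AF F"
  shows "admissible F S \<and> G = reduct F S"
  using assms(1)
proof (induction "(G, S)" arbitrary: G S rule: rtranclp_induct)
  case base
  then show ?case using reduct_empty[OF af]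
    unfolding admissible_def conflict_free_def by auto
next
  case (step y G S)
  obtain G0 S0 where y: "y = (G0, S0)" by (cases y)
  from step.hyps(2) y obtain S' where S': "S' \<in> alpha_adm (IS_u G0) (IS_uc G0) (IS_c G0)"
    and G: "G = reduct G0 S'" and S: "S = S0 \<union> S'"
    by (cases rule: trans_step.cases) auto
  from step.hyps(3) y have ih: "admissible F S0" "G0 = reduct F S0" by auto
  from S' have "S' \<in> IS G0" using alpha_IS by blast
  then have "S' \<subseteq> fst G0" "admissible G0 S'" using IS_sub[of S' G0] by auto
  then show ?case using adm_union[OF af ih(1)] reduct_reduct ih G S by metis
qed

lemma sound:
  assumes af: "is_AF F" and a: "admissible F S" and u: "IS_u (reduct F S) = {}"
  shows "complete_ext F S"
proof -
  obtain A R where F: "F = (A, R)" by (cases F)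
  let ?A' = "A - (S \<union> plus_set R S)"
  have rF: "reduct F S = (?A', R \<inter> (?A' \<times> ?A'))" unfolding F reduct_def Let_def by simp
  have cfS: "\<And>x y. x \<in> S \<Longrightarrow> y \<in> S \<Longrightarrow> (x,y) \<notin> R"
    and dS: "\<And>x c. x \<in> S \<Longrightarrow> (c,x) \<in> R \<Longrightarrow> \<exists>d\<in>S. (d,c) \<in> R"
    using a unfolding admissible_def conflict_free_def defends_def F by auto
  show ?thesis unfolding complete_ext_def
  proof (intro conjI ballI impI a)
    fix b assume bA: "b \<in> fst F" and db: "defends F S b"
    show "b \<in> S"
    proof (rule ccontr)
      assume nb: "b \<notin> S"
      have dbb: "\<And>c. (c,b) \<in> R \<Longrightarrow> \<exists>d\<in>S. (d,c) \<in> R" using db unfolding defends_def F by auto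
      have "b \<notin> plus_set R S"
      proof
        assume "b \<in> plus_set R S"
        then obtain d where "d \<in> S" "(d,b) \<in> R" unfolding plus_set_def by blast
        with dbb cfS show False by blast
      qed
      then have bA': "b \<in> ?A'" using bA nb F by auto
      have noatt: "\<And>c. c \<in> ?A' \<Longrightarrow> (c,b) \<notin> R"
        using dbb unfolding plus_set_def by blast
      have adm: "admissible (reduct F S) {b}"
        unfolding admissible_def conflict_free_def defends_def rF using bA' noatt by auto
      have "initial_set (reduct F S) {b}"
        unfolding initial_set_def using adm by auto
      moreover have "minus_set (snd (reduct F S)) {b} = {}"
        unfolding minus_set_def rF using noatt by auto
      ultimately have "{b} \<in> IS_u (reduct F S)" unfolding IS_u_def IS_def by auto
      with u show False by blast
    qed
  qed
qed

lemma exists_initial: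
  assumes "finite X" "X \<noteq> {}" "admissible G X"
  shows "\<exists>T \<subseteq> X. initial_set G T"
proof -
  define P where "P = (\<lambda>T. T \<noteq> {} \<and> T \<subseteq> X \<and> admissible G T)"
  have ex: "P X" using assms unfolding P_def by blast
  obtain T where T: "P T" and min: "\<And>U. P U \<Longrightarrow> card T \<le> card U"
    using ex_has_least_nat[where P=P and m=card, OF ex] by metis
  have T1: "T \<noteq> {}" and T2: "T \<subseteq> X" and T3: "admissible G T" using T unfolding P_def by simp_all
  have finT: "finite T" using T2 assms(1) finite_subset by blast
  have "\<not> (\<exists>S'. S' \<noteq> {} \<and> S' \<subset> T \<and> admissible G S')"
  proof
    assume "\<exists>S'. S' \<noteq> {} \<and> S' \<subset> T \<and> admissible G S'"
    then obtain S' where S': "S' \<noteq> {}" "S' \<subset> T" "admissible G S'" by blast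
    have "card S' < card T" using psubset_card_mono[OF finT S'(2)] .
    moreover have "P S'" unfolding P_def using S' T2 by blast
    ultimately show False using min[of S'] by simp
  qed
  then have "initial_set G T" unfolding initial_set_def using T1 T3 by simp
  then show ?thesis using T2 by blast
qed

lemma diff_adm:
  assumes c: "complete_ext F E" and sub: "S \<subseteq> E"
  shows "admissible (reduct F S) (E - S)"
proof -
  obtain A R where F: "F = (A, R)" by (cases F)
  let ?A' = "A - (S \<union> plus_set R S)"
  have rF: "reduct F S = (?A', R \<inter> (?A' \<times> ?A'))" unfolding F reduct_def Let_def by simp
  have EA: "E \<subseteq> A" and cfE: "\<And>x y. x \<in> E \<Longrightarrow> y \<in> E \<Longrightarrow> (x,y) \<notin> R"
    and dE: "\<And>x c. x \<in> E \<Longrightarrow> (c,x) \<in> R \<Longrightarrow> \<exists>d\<in>E. (d,c) \<in> R"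
    using c unfolding complete_ext_def admissible_def conflict_free_def defends_def F by auto
  have EA': "E - S \<subseteq> ?A'" using EA cfE sub unfolding plus_set_def by blast
  show ?thesis
    unfolding admissible_def conflict_free_def defends_def rF fst_conv snd_conv
  proof (intro conjI ballI allI impI EA')
    fix x y assume "x \<in> E - S" "y \<in> E - S"
    then show "(x,y) \<notin> R \<inter> ?A' \<times> ?A'" using cfE by blast
  next
    fix b c assume b: "b \<in> E - S" and cb: "(c,b) \<in> R \<inter> ?A' \<times> ?A'"
    then obtain d where d: "d \<in> E" "(d,c) \<in> R" using dE by blast
    have "d \<notin> S" using cb d unfolding plus_set_def by blast
    then show "\<exists>d\<in>E - S. (d,c) \<in> R \<inter> ?A' \<times> ?A'" using d cb EA' by blast
  qed
qed

lemma complete_no_u: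
  assumes af: "is_AF F" and c: "complete_ext F E"
  shows "IS_u (reduct F E) = {}"
proof (rule ccontr)
  obtain A R where F: "F = (A, R)" by (cases F)
  let ?A' = "A - (E \<union> plus_set R E)"
  have rF: "reduct F E = (?A', R \<inter> (?A' \<times> ?A'))" unfolding F reduct_def Let_def by simp
  have RA: "R \<subseteq> A \<times> A" using af F unfolding is_AF_def by simp
  assume "IS_u (reduct F E) \<noteq> {}"
  then obtain T where T: "T \<in> IS (reduct F E)" "minus_set (snd (reduct F E)) T = {}"
    unfolding IS_u_def by auto
  then obtain t where t: "t \<in> T" unfolding IS_def initial_set_def by auto
  have tA: "t \<in> ?A'" using IS_sub[OF T(1)] t rF by auto
  have noatt: "\<And>c. c \<in> ?A' \<Longrightarrow> (c,t) \<notin> R" using T(2) t tA unfolding minus_set_def rF by auto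
  have "defends F E t" unfolding defends_def F snd_conv
  proof (intro allI impI)
    fix c assume ct: "(c,t) \<in> R"
    have "c \<in> A" using RA ct by auto
    with noatt ct have "c \<in> E \<or> c \<in> plus_set R E" by blast
    then show "\<exists>d\<in>E. (d, c) \<in> R"
    proof
      assume "c \<in> E" then have "t \<in> plus_set R E" using ct unfolding plus_set_def by blast
      with tA show ?thesis by blast
    next
      assume "c \<in> plus_set R E" then show ?thesis unfolding plus_set_def by blast
    qed
  qed
  then have "t \<in> E" using c tA F unfolding complete_ext_def by auto
  with tA show False by blast
qed

lemma reach_complete:
  assumes af: "is_AF F" and c: "complete_ext F E"
  shows "admissible F S \<Longrightarrow> S \<subseteq> E \<Longrightarrow> (trans_step alpha_adm)\<^sup>*\<^sup>* (reduct F S, S) (reduct F E, E)"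
proof (induction "card (E - S)" arbitrary: S rule: less_induct)
  case less
  have finE: "finite E" using af c unfolding is_AF_def complete_ext_def admissible_def
    using finite_subset by blast
  show ?case
  proof (cases "S = E")
    case True then show ?thesis by simp
  next
    case False
    then have ne: "E - S \<noteq> {}" using less.prems by blast
    obtain T where T: "T \<subseteq> E - S" "initial_set (reduct F S) T"
      using exists_initial[OF _ ne diff_adm[OF c less.prems(2)]] finE by blast
    have TIS: "T \<in> alpha_adm (IS_u (reduct F S)) (IS_uc (reduct F S)) (IS_c (reduct F S))"
      using T alpha_IS unfolding IS_def by blast
    have st: "trans_step alpha_adm (reduct F S, S) (reduct (reduct F S) T, S \<union> T)"
      using trans_step.intros[where \<alpha>=alpha_adm, OF TIS] .
    have Tsub: "T \<subseteq> fst (reduct F S)" "admissible (reduct F S) T"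
      using IS_sub[of T "reduct F S"] T unfolding IS_def by auto
    have eq: "reduct (reduct F S) T = reduct F (S \<union> T)" using reduct_reduct[OF Tsub(1)] .
    have adm: "admissible F (S \<union> T)" using adm_union[OF af less.prems(1) Tsub(2)] .
    have Tne: "T \<noteq> {}" using T unfolding initial_set_def by auto
    have "card (E - (S \<union> T)) < card (E - S)"
      using finE T Tne by (intro psubset_card_mono) auto
    then have "(trans_step alpha_adm)\<^sup>*\<^sup>* (reduct F (S \<union> T), S \<union> T) (reduct F E, E)"
      using less.hyps adm T less.prems(2) by blast
    then show ?thesis using st eq by (metis converse_rtranclp_into_rtranclp)
  qed
qed

theorem theorem3:
  shows "serialisable (complete_sem :: 'a af \<Rightarrow> 'a set set) alpha_adm beta_co"
  unfolding serialisable_def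
proof (intro allI impI)
  fix F :: "'a af" assume af: "is_AF F"
  show "complete_sem F = serial_ext alpha_adm beta_co F"
  proof (intro equalityI subsetI)
    fix E assume "E \<in> complete_sem F"
    then have c: "complete_ext F E" unfolding complete_sem_def by simp
    have a0: "admissible F {}" unfolding admissible_def conflict_free_def by simp
    have "(trans_step alpha_adm)\<^sup>*\<^sup>* (F, {}) (reduct F E, E)"
      using reach_complete[OF af c a0] reduct_empty[OF af] by simp
    moreover have "beta_co (reduct F E) E" unfolding beta_co_def using complete_no_u[OF af c] .
    ultimately show "E \<in> serial_ext alpha_adm beta_co F"
    proof -
      assume h: "(trans_step alpha_adm)\<^sup>*\<^sup>* (F, {}) (reduct F E, E)" "beta_co (reduct F E) E"
      have "leadsto alpha_adm beta_co (F, {}) (reduct F E, E)"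
        unfolding leadsto_def fst_conv snd_conv using h by (rule conjI)
      then show ?thesis unfolding serial_ext_def by blast
    qed
  next
    fix S assume "S \<in> serial_ext alpha_adm beta_co F"
    then obtain G where "leadsto alpha_adm beta_co (F, {}) (G, S)"
      unfolding serial_ext_def by blast
    then have r: "(trans_step alpha_adm)\<^sup>*\<^sup>* (F, {}) (G, S)" and b: "beta_co G S"
      unfolding leadsto_def fst_conv snd_conv by simp_all
    from reach_inv[OF r af] have "admissible F S" "G = reduct F S" by auto
    then have "complete_ext F S" using sound[OF af] b unfolding beta_co_def by blast
    then show "S \<in> complete_sem F" unfolding complete_sem_def by simp
  qed
qed

end
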